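(* Let $(\Omega,\rho)$ be a metric space, $\mathcal{F}\subseteq[0,1]^{\Omega}$ a class of measurable functions, and $\mathcal{D}$ a distribution over $\Omega\times[0,1]$ with marginal $\mu$ on $\Omega$ which is realizable by $\mathcal{F}$. Then for every $\delta\in(0,1)$ and $n\in\mathbb{N}$, with probability at least $1-\delta$ over $S\sim\mathcal{D}^n$, for all $f\in\mathcal{F}$: \[ L_\mathcal{D}(f) \leq 1.01\,L_S(f) +\inf_{\alpha\geq0}\left(\alpha+\frac{205\log \mathcal{N}_{[\,]}(\mathcal{F},L_1(\mu),\alpha)}{n}\right) +\frac{205\log(1/\delta)}{n}. \]
   Context: For measurable $f:\Omega\to[0,1]$, $L_\mathcal{D}(f):=\mathbb{E}_{(X,Y)\sim\mathcal{D}}|f(X)-Y|$ and, for $S=(X_i,Y_i)_{i=1}^n$, $L_S(f):=\frac1n\sum_{i=1}^n|f(X_i)-Y_i|$. $\mathcal{D}$ is realizable by $\mathcal{F}$ if there exists $f^*\in\mathcal{F}$ with $L_\mathcal{D}(f^* )=0$. A bracket $[l,u]$ ($l,u:\Omega\to[0,1]$) contains $f$ if $l\le f\le u$; it is an $\alpha$-bracket in $L_1(\mu)$ if $\int|u-l|d\mu\le\alpha$; $\mathcal{N}_{[\,]}(\mathcal{F},L_1(\mu),\alpha)$ is the minimal number of $\alpha$-brackets covering $\mathcal{F}$. *)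

theory Defs
  imports "HOL-Probability.Probability"
begin

definition pop_loss :: "('a \<times> real) measure \<Rightarrow> ('a \<Rightarrow> real) \<Rightarrow> real" where
  "pop_loss D f = (\<integral>z. \<bar>f (fst z) - snd z\<bar> \<partial>D)"

definition emp_loss :: "nat \<Rightarrow> (nat \<Rightarrow> 'a \<times> real) \<Rightarrow> ('a \<Rightarrow> real) \<Rightarrow> real" where
  "emp_loss n S f = (\<Sum>i<n. \<bar>f (fst (S i)) - snd (S i)\<bar>) / real n"

definition bracket_cover ::
  "'a::metric_space measure \<Rightarrow> ('a \<Rightarrow> real) set \<Rightarrow> real \<Rightarrow> (('a \<Rightarrow> real) \<times> ('a \<Rightarrow> real)) set \<Rightarrow> bool" where
  "bracket_cover \<mu> F \<alpha> B \<longleftrightarrow> finite B \<and>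
     (\<forall>(l,u)\<in>B. l \<in> borel_measurable borel \<and> u \<in> borel_measurable borel \<and>
        (\<forall>x. 0 \<le> l x \<and> l x \<le> 1 \<and> 0 \<le> u x \<and> u x \<le> 1) \<and>
        (\<integral>x. \<bar>u x - l x\<bar> \<partial>\<mu>) \<le> \<alpha>) \<and>
     (\<forall>f\<in>F. \<exists>(l,u)\<in>B. \<forall>x. l x \<le> f x \<and> f x \<le> u x)"

text \<open>Bracketing number N_[](F, L_1(mu), alpha): minimal size of such a cover
  (only meaningful when some finite cover exists).\<close>
definition bracketing_number ::
  "'a::metric_space measure \<Rightarrow> ('a \<Rightarrow> real) set \<Rightarrow> real \<Rightarrow> nat" where
  "bracketing_number \<mu> F \<alpha> = (LEAST k. \<exists>B. bracket_cover \<mu> F \<alpha> B \<and> card B = k)"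

text \<open>inf_{alpha >= 0} (alpha + c * log N(alpha) / n). Values alpha with no finite
  bracket cover give +infinity and thus do not affect the infimum; they are excluded.\<close>
definition bracket_complexity ::
  "'a::metric_space measure \<Rightarrow> ('a \<Rightarrow> real) set \<Rightarrow> real \<Rightarrow> nat \<Rightarrow> real" where
  "bracket_complexity \<mu> F c n =
     (INF \<alpha>\<in>{\<alpha>. 0 \<le> \<alpha> \<and> (\<exists>B. bracket_cover \<mu> F \<alpha> B)}.
        \<alpha> + c * ln (real (bracketing_number \<mu> F \<alpha>)) / real n)"

end

theory Submission imports Defs begin
lemma exp_pt:
  fixes x :: real assumes "0 \<le> x" "x \<le> 1"
  shows "exp (- x / 100) \<le> 1 - x / 101"
proof -
  have c: "convex_on UNIV (\<lambda>x. exp ((1/100) * x))" by (rule convex_on_exp) simp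
  have "exp ((1/100) * ((1 - x) * 0 + x * (-1))) \<le> (1 - x) * exp ((1/100) * 0) + x * exp ((1/100) * (-1))"
    using convex_onD[OF c, of x 0 "-1"] assms by simp
  hence h: "exp (- x / 100) \<le> (1 - x) + x * exp (- 1/100)" by simp
  have e1: "1 + 1/100 \<le> exp (1/100::real)" using exp_ge_add_one_self[of "1/100::real"] by simp
  have "exp (- 1/100::real) = inverse (exp (1/100))" by (simp add: exp_minus[symmetric])
  also have "\<dots> \<le> inverse (1 + 1/100)" using e1 by (intro le_imp_inverse_le) auto
  finally have "exp (- 1/100::real) \<le> 100/101" by simp
  hence "x * exp (- 1/100) \<le> x * (100/101)" using assms by (intro mult_left_mono) auto
  thus ?thesis using h by simp
qed

lemma chernoff_lower:
  fixes D :: "'b measure" and g :: "'b \<Rightarrow> real"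
  assumes D: "prob_space D" and gm: "g \<in> borel_measurable D"
    and gr: "\<And>z. 0 \<le> g z \<and> g z \<le> 1"
  shows "emeasure (PiM {..<n} (\<lambda>_. D)) {S\<in>space (PiM {..<n} (\<lambda>_. D)). (\<Sum>i<n. g (S i)) < T}
          \<le> ennreal (exp (T/100 - real n * (\<integral>z. g z \<partial>D) / 101))"
proof -
  interpret D: prob_space D by (rule D)
  interpret P: product_sigma_finite "\<lambda>_. D"
    by (simp add: product_sigma_finite_def D.sigma_finite_measure_axioms)
  define M where "M = PiM {..<n} (\<lambda>_. D)"
  define A where "A = {S\<in>space M. (\<Sum>i<n. g (S i)) < T}"
  define \<mu> where "\<mu> = (\<integral>z. g z \<partial>D)"
  have [measurable]: "g \<in> borel_measurable D" by (rule gm)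
  have Am: "A \<in> sets M" unfolding A_def M_def by measurable
  have intg: "integrable D g"
    by (rule D.integrable_const_bound[where B=1]) (use gr in auto)
  have inte: "integrable D (\<lambda>z. exp (- g z / 100))"
    by (rule D.integrable_const_bound[where B=1]) (use gr in auto)
  have v1: "(\<integral>z. exp (- g z / 100) \<partial>D) \<le> (\<integral>z. 1 - g z / 101 \<partial>D)"
    by (intro integral_mono inte) (use intg exp_pt gr in auto)
  also have "\<dots> = 1 - \<mu> / 101" using intg by (simp add: \<mu>_def D.prob_space)
  also have "\<dots> \<le> exp (- \<mu> / 101)" using exp_ge_add_one_self[of "- \<mu> / 101"] by simp
  finally have v: "(\<integral>z. exp (- g z / 100) \<partial>D) \<le> exp (- \<mu> / 101)" .
  define v where "v = (\<integral>z. exp (- g z / 100) \<partial>D)"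
  have v0: "0 \<le> v" unfolding v_def by (intro integral_nonneg_AE) auto
  have nnv: "(\<integral>\<^sup>+z. ennreal (exp (- g z / 100)) \<partial>D) = ennreal v"
    unfolding v_def by (rule nn_integral_eq_integral[OF inte]) auto
  have "emeasure M A = (\<integral>\<^sup>+S. indicator A S \<partial>M)" using Am by simp
  also have "\<dots> \<le> (\<integral>\<^sup>+S. ennreal (exp (T/100)) * (\<Prod>i<n. ennreal (exp (- g (S i) / 100))) \<partial>M)"
  proof (intro nn_integral_mono)
    fix S assume S: "S \<in> space M"
    have "(\<Prod>i<n. ennreal (exp (- g (S i) / 100))) = ennreal (\<Prod>i<n. exp (- g (S i) / 100))"
      by (simp add: prod_ennreal)
    also have "(\<Prod>i<n. exp (- g (S i) / 100)) = exp (\<Sum>i<n. - g (S i) / 100)"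
      by (simp add: exp_sum)
    finally have eq: "ennreal (exp (T/100)) * (\<Prod>i<n. ennreal (exp (- g (S i) / 100)))
        = ennreal (exp (T/100 + (\<Sum>i<n. - g (S i) / 100)))"
      by (simp add: ennreal_mult[symmetric] exp_add)
    show "indicator A S \<le> ennreal (exp (T/100)) * (\<Prod>i<n. ennreal (exp (- g (S i) / 100)))"
    proof (cases "S \<in> A")
      case True
      hence "(\<Sum>i<n. g (S i)) < T" unfolding A_def by auto
      hence "0 \<le> T/100 + (\<Sum>i<n. - g (S i) / 100)"
        by (simp add: sum_negf sum_divide_distrib[symmetric])
      hence "1 \<le> exp (T/100 + (\<Sum>i<n. - g (S i) / 100))" by simp
      thus ?thesis using True eq by simp
    qed simp
  qed
  also have "\<dots> = ennreal (exp (T/100)) * (\<integral>\<^sup>+S. (\<Prod>i<n. ennreal (exp (- g (S i) / 100))) \<partial>M)"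
    unfolding M_def by (rule nn_integral_cmult) measurable
  also have "(\<integral>\<^sup>+S. (\<Prod>i<n. ennreal (exp (- g (S i) / 100))) \<partial>M)
      = (\<Prod>i<n. (\<integral>\<^sup>+z. ennreal (exp (- g z / 100)) \<partial>D))"
    unfolding M_def using P.product_nn_integral_prod[of "{..<n}" "\<lambda>_ z. ennreal (exp (- g z / 100))"] by simp
  also have "\<dots> = ennreal (v ^ n)" using nnv v0 by (simp add: ennreal_power)
  also have "ennreal (exp (T/100)) * ennreal (v ^ n) = ennreal (exp (T/100) * v ^ n)"
    using v0 by (simp add: ennreal_mult)
  also have "exp (T/100) * v ^ n \<le> exp (T/100) * exp (- \<mu> / 101) ^ n"
    using v v0 unfolding v_def[symmetric] by (intro mult_left_mono power_mono) auto
  also have "exp (T/100) * exp (- \<mu> / 101) ^ n = exp (T/100 - real n * \<mu> / 101)"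
    by (simp add: exp_of_nat_mult[symmetric] exp_add[symmetric] exp_diff)
  finally show ?thesis unfolding M_def A_def \<mu>_def by (simp add: ennreal_leI)
qed

lemma pt_upper:
  fixes f l u y :: real
  assumes "l \<le> f" "f \<le> u" "0 \<le> l" "u \<le> 1" "0 \<le> y" "y \<le> 1"
  shows "\<bar>f - y\<bar> \<le> min 1 (max 0 (max (l - y) (y - u))) + \<bar>u - l\<bar>"
  using assms by (auto simp: min_def max_def abs_if)

lemma pt_lower:
  fixes f l u y :: real
  assumes "l \<le> f" "f \<le> u"
  shows "min 1 (max 0 (max (l - y) (y - u))) \<le> \<bar>f - y\<bar>"
  using assms by (auto simp: min_def max_def abs_if)

theorem proposition2:
  fixes D :: "('a::metric_space \<times> real) measure"
    and F :: "('a \<Rightarrow> real) set"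
    and \<delta> :: real and n :: nat
  assumes D_prob: "prob_space D"
    and D_sets: "sets D = sets borel"
    and D_range: "AE z in D. 0 \<le> snd z \<and> snd z \<le> 1"
    and F_meas: "\<And>f. f \<in> F \<Longrightarrow> f \<in> borel_measurable borel"
    and F_range: "\<And>f x. f \<in> F \<Longrightarrow> 0 \<le> f x \<and> f x \<le> 1"
    and realizable: "\<exists>f\<in>F. pop_loss D f = 0"
    and \<delta>: "0 < \<delta>" "\<delta> < 1"
    and n: "n \<ge> 1"
  shows "\<exists>E \<in> sets (PiM {..<n} (\<lambda>_. D)).
           measure (PiM {..<n} (\<lambda>_. D)) E \<ge> 1 - \<delta> \<and>
           (\<forall>S\<in>E. \<forall>f\<in>F.
              pop_loss D f \<le> 1.01 * emp_loss n S f
                + bracket_complexity (distr D borel fst) F 205 n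
                + 205 * ln (1 / \<delta>) / real n)"
proof -
  interpret D: prob_space D by (rule D_prob)
  define M where "M = PiM {..<n} (\<lambda>_. D)"
  interpret M: prob_space M unfolding M_def by (intro prob_space_PiM D_prob)
  define \<mu> where "\<mu> = distr D borel (fst :: 'a \<times> real \<Rightarrow> 'a)"
  have fstb: "(fst :: 'a \<times> real \<Rightarrow> 'a) \<in> borel_measurable borel"
    by (intro borel_measurable_continuous_onI continuous_on_fst continuous_on_id)
  have sndb: "(snd :: 'a \<times> real \<Rightarrow> real) \<in> borel_measurable borel"
    by (intro borel_measurable_continuous_onI continuous_on_snd continuous_on_id)
  have fstm: "(fst :: 'a \<times> real \<Rightarrow> 'a) \<in> borel_measurable D"
    using fstb measurable_cong_sets[OF D_sets refl] by blast
  have sndm: "(snd :: 'a \<times> real \<Rightarrow> real) \<in> borel_measurable D"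
    using sndb measurable_cong_sets[OF D_sets refl] by blast
  have compm: "(\<lambda>z. h (fst z)) \<in> borel_measurable D" if "h \<in> borel_measurable borel" for h :: "'a \<Rightarrow> real"
    using measurable_compose[OF fstm that] by (simp add: o_def)
  have Fne: "F \<noteq> {}" using realizable by auto
  define c where "c = bracket_complexity \<mu> F 205 n"
  define \<phi> where "\<phi> = (\<lambda>\<alpha>. \<alpha> + 205 * ln (real (bracketing_number \<mu> F \<alpha>)) / real n)"
  define A where "A = {\<alpha>. 0 \<le> \<alpha> \<and> (\<exists>B. bracket_cover \<mu> F \<alpha> B)}"
  have c_eq: "c = Inf (\<phi> ` A)" unfolding c_def bracket_complexity_def \<phi>_def A_def by simp
  have num: "\<exists>B. bracket_cover \<mu> F \<alpha> B \<and> card B = bracketing_number \<mu> F \<alpha>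
             \<and> bracketing_number \<mu> F \<alpha> \<ge> 1" if "\<alpha> \<in> A" for \<alpha>
  proof -
    from that obtain B0 where "bracket_cover \<mu> F \<alpha> B0" unfolding A_def by auto
    hence ex: "\<exists>k B. bracket_cover \<mu> F \<alpha> B \<and> card B = k" by blast
    obtain B where B: "bracket_cover \<mu> F \<alpha> B" "card B = bracketing_number \<mu> F \<alpha>"
      using LeastI_ex[OF ex] unfolding bracketing_number_def by blast
    have "B \<noteq> {}" using B(1) Fne unfolding bracket_cover_def by blast
    moreover have "finite B" using B(1) unfolding bracket_cover_def by blast
    ultimately have "card B \<ge> 1" by (simp add: Suc_le_eq card_gt_0_iff)
    thus ?thesis using B by auto
  qed
  have phi_nn: "0 \<le> \<phi> \<alpha>" if "\<alpha> \<in> A" for \<alpha>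
  proof -
    have "bracketing_number \<mu> F \<alpha> \<ge> 1" using num[OF that] by blast
    hence "0 \<le> ln (real (bracketing_number \<mu> F \<alpha>))" by simp
    moreover have "0 \<le> \<alpha>" using that unfolding A_def by auto
    ultimately show ?thesis unfolding \<phi>_def by simp
  qed
  have one_A: "1 \<in> A"
  proof -
    interpret \<mu>: prob_space \<mu> unfolding \<mu>_def by (intro D.prob_space_distr fstm)
    have "bracket_cover \<mu> F 1 {(\<lambda>_. 0, \<lambda>_. 1)}"
      unfolding bracket_cover_def using F_range by (auto simp: \<mu>.prob_space)
    thus ?thesis unfolding A_def by auto
  qed
  have bdd: "bdd_below (\<phi> ` A)" using phi_nn by (intro bdd_belowI2) auto
  define \<eta> where "\<eta> = 104 * ln (1 / \<delta>) / real n"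
  have ld: "0 < ln (1 / \<delta>)" using \<delta> by simp
  have \<eta>: "0 < \<eta>" unfolding \<eta>_def using ld n by simp
  have "Inf (\<phi> ` A) < c + \<eta>" using c_eq \<eta> by simp
  then obtain \<alpha> where \<alpha>A: "\<alpha> \<in> A" and \<alpha>: "\<phi> \<alpha> < c + \<eta>"
    using cInf_lessD[of "\<phi> ` A" "c + \<eta>"] one_A by blast
  define N where "N = bracketing_number \<mu> F \<alpha>"
  obtain B where B: "bracket_cover \<mu> F \<alpha> B" "card B = N" and N1: "N \<ge> 1"
    using num[OF \<alpha>A] unfolding N_def by blast
  have Bfin: "finite B" using B(1) unfolding bracket_cover_def by blast
  have Bprop: "\<And>l u. (l, u) \<in> B \<Longrightarrow> l \<in> borel_measurable borel \<and> u \<in> borel_measurable borel \<and>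
        (\<forall>x. 0 \<le> l x \<and> l x \<le> 1 \<and> 0 \<le> u x \<and> u x \<le> 1) \<and> (\<integral>x. \<bar>u x - l x\<bar> \<partial>\<mu>) \<le> \<alpha>"
    using B(1) unfolding bracket_cover_def by blast
  have Bcov: "\<And>f. f \<in> F \<Longrightarrow> \<exists>(l,u)\<in>B. \<forall>x. l x \<le> f x \<and> f x \<le> u x"
    using B(1) unfolding bracket_cover_def by blast
  define g where "g = (\<lambda>(l::'a\<Rightarrow>real,u::'a\<Rightarrow>real) (z::'a\<times>real).
     min 1 (max 0 (max (l (fst z) - snd z) (snd z - u (fst z)))))"
  have gm: "g b \<in> borel_measurable D" if "b \<in> B" for b
  proof -
    obtain l u where b: "b = (l, u)" by (cases b)
    have lm: "(\<lambda>z. l (fst z)) \<in> borel_measurable D" and um: "(\<lambda>z. u (fst z)) \<in> borel_measurable D"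
      using Bprop[of l u] that b compm by auto
    note [measurable] = lm um sndm
    show ?thesis unfolding b g_def by simp measurable
  qed
  have gr: "\<And>b z. 0 \<le> g b z \<and> g b z \<le> 1" unfolding g_def by auto
  define K where "K = ln (real N) + ln (1 / \<delta>)"
  define m where "m = (\<lambda>b. \<integral>z. g b z \<partial>D)"
  define T where "T = (\<lambda>b. real n * (m b - 101 * K / real n) * 100 / 101)"
  define bad where "bad = (\<lambda>b. {S\<in>space M. (\<Sum>i<n. g b (S i)) < T b})"
  have bad_sets: "bad b \<in> sets M" if "b \<in> B" for b
  proof -
    note [measurable] = gm[OF that]
    show ?thesis unfolding bad_def M_def by measurable
  qed
  have bad_meas: "measure M (bad b) \<le> \<delta> / real N" if "b \<in> B" for b
  proof -
    have "emeasure M (bad b) \<le> ennreal (exp (T b / 100 - real n * m b / 101))"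
      unfolding bad_def M_def m_def by (rule chernoff_lower[OF D_prob gm[OF that] gr])
    also have "T b / 100 - real n * m b / 101 = - K" unfolding T_def using n by (simp add: field_simps)
    also have "exp (- K) = \<delta> / real N" unfolding K_def using N1 \<delta>
      by (simp add: exp_minus exp_add exp_diff ln_div)
    finally have "ennreal (measure M (bad b)) \<le> ennreal (\<delta> / real N)"
      by (simp add: M.emeasure_eq_measure)
    thus ?thesis using \<delta> N1 by (simp add: ennreal_le_iff)
  qed
  define E where "E = space M - (\<Union>b\<in>B. bad b)"
  have Uset: "(\<Union>b\<in>B. bad b) \<in> sets M" using bad_sets Bfin by (intro sets.finite_UN) auto
  have Esets: "E \<in> sets M" unfolding E_def using Uset by auto
  have "measure M (\<Union>b\<in>B. bad b) \<le> (\<Sum>b\<in>B. measure M (bad b))"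
    using bad_sets Bfin by (intro measure_UNION_le) auto
  also have "\<dots> \<le> (\<Sum>b\<in>B. \<delta> / real N)" using bad_meas by (intro sum_mono) auto
  also have "\<dots> = \<delta>" using B(2) N1 by simp
  finally have Emeas: "measure M E \<ge> 1 - \<delta>"
    unfolding E_def using Uset by (subst M.prob_compl) auto
  have main: "pop_loss D f \<le> 1.01 * emp_loss n S f + c + 205 * ln (1 / \<delta>) / real n"
    if S: "S \<in> E" and f: "f \<in> F" for S f
  proof -
    obtain l u where lu: "(l, u) \<in> B" and br: "\<And>x. l x \<le> f x \<and> f x \<le> u x"
      using Bcov[OF f] by blast
    note P = Bprop[OF lu]
    have SM: "S \<in> space M" and Sb: "S \<notin> bad (l, u)" using S lu unfolding E_def by auto
    have "T (l, u) \<le> (\<Sum>i<n. g (l, u) (S i))" using SM Sb unfolding bad_def by auto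
    also have "\<dots> \<le> (\<Sum>i<n. \<bar>f (fst (S i)) - snd (S i)\<bar>)"
      unfolding g_def by (intro sum_mono) (auto intro!: pt_lower simp: br)
    also have "\<dots> = real n * emp_loss n S f" unfolding emp_loss_def using n by simp
    finally have "real n * (m (l, u) - 101 * K / real n) * 100 / 101 \<le> real n * emp_loss n S f"
      unfolding T_def .
    hence "(m (l, u) - 101 * K / real n) * 100 / 101 \<le> emp_loss n S f"
      using n by (simp add: mult.assoc mult_le_cancel_left_pos)
    hence m_le: "m (l, u) \<le> 1.01 * emp_loss n S f + 101 * K / real n" by simp
    have lm: "(\<lambda>z. l (fst z)) \<in> borel_measurable D" and um: "(\<lambda>z. u (fst z)) \<in> borel_measurable D"
      and fm: "(\<lambda>z. f (fst z)) \<in> borel_measurable D"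
      using P compm F_meas[OF f] by auto
    note [measurable] = lm um fm sndm gm[OF lu]
    have ae1: "AE z in D. norm (\<bar>f (fst z) - snd z\<bar>) \<le> 1"
    proof (rule eventually_mono[OF D_range])
      fix z :: "'a \<times> real" assume "0 \<le> snd z \<and> snd z \<le> 1"
      moreover have "0 \<le> f (fst z) \<and> f (fst z) \<le> 1" using F_range[OF f] by blast
      ultimately show "norm (\<bar>f (fst z) - snd z\<bar>) \<le> 1" by (auto simp: abs_if)
    qed
    have i1: "integrable D (\<lambda>z. \<bar>f (fst z) - snd z\<bar>)"
      by (rule D.integrable_const_bound[OF ae1]) simp
    have i2: "integrable D (g (l, u))"
      by (rule D.integrable_const_bound[where B=1]) (use gr in auto)
    have i3: "integrable D (\<lambda>z. \<bar>u (fst z) - l (fst z)\<bar>)"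
    proof (rule D.integrable_const_bound[where B=1])
      have "\<And>z::'a \<times> real. norm (\<bar>u (fst z) - l (fst z)\<bar>) \<le> 1"
      proof -
        fix z :: "'a \<times> real"
        have "0 \<le> l (fst z) \<and> l (fst z) \<le> 1 \<and> 0 \<le> u (fst z) \<and> u (fst z) \<le> 1" using P by blast
        thus "norm (\<bar>u (fst z) - l (fst z)\<bar>) \<le> 1" by (auto simp: abs_if)
      qed
      thus "AE z in D. norm (\<bar>u (fst z) - l (fst z)\<bar>) \<le> 1" by simp
    qed simp
    have "pop_loss D f \<le> (\<integral>z. g (l, u) z + \<bar>u (fst z) - l (fst z)\<bar> \<partial>D)"
      unfolding pop_loss_def
    proof (rule integral_mono_AE[OF i1])
      show "integrable D (\<lambda>z. g (l, u) z + \<bar>u (fst z) - l (fst z)\<bar>)" using i2 i3 by auto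
      show "AE z in D. \<bar>f (fst z) - snd z\<bar> \<le> g (l, u) z + \<bar>u (fst z) - l (fst z)\<bar>"
      proof (rule eventually_mono[OF D_range])
        fix z :: "'a \<times> real" assume y: "0 \<le> snd z \<and> snd z \<le> 1"
        have "0 \<le> l (fst z) \<and> u (fst z) \<le> 1" using P by blast
        then show "\<bar>f (fst z) - snd z\<bar> \<le> g (l, u) z + \<bar>u (fst z) - l (fst z)\<bar>"
          using y br[of "fst z"] pt_upper[of "l (fst z)" "f (fst z)" "u (fst z)" "snd z"] by (simp add: g_def)
      qed
    qed
    also have "\<dots> = m (l, u) + (\<integral>z. \<bar>u (fst z) - l (fst z)\<bar> \<partial>D)"
      unfolding m_def using i2 i3 by simp
    also have "(\<integral>z. \<bar>u (fst z) - l (fst z)\<bar> \<partial>D) = (\<integral>x. \<bar>u x - l x\<bar> \<partial>\<mu>)"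
      unfolding \<mu>_def using P by (subst integral_distr[OF fstm]) auto
    finally have pl: "pop_loss D f \<le> m (l, u) + \<alpha>" using P by linarith
    have lnN: "0 \<le> ln (real N)" using N1 by simp
    have "\<phi> \<alpha> = \<alpha> + 205 * ln (real N) / real n" unfolding \<phi>_def N_def by simp
    hence a2: "\<alpha> + 205 * ln (real N) / real n < c + 104 * ln (1 / \<delta>) / real n"
      using \<alpha> unfolding \<eta>_def by simp
    have "101 * K / real n = 101 * ln (real N) / real n + 101 * ln (1 / \<delta>) / real n"
      unfolding K_def by (simp add: add_divide_distrib distrib_left)
    moreover have "101 * ln (real N) / real n \<le> 205 * ln (real N) / real n"
      using lnN n by (intro divide_right_mono) auto
    moreover have "104 * ln (1 / \<delta>) / real n + 101 * ln (1 / \<delta>) / real n = 205 * ln (1 / \<delta>) / real n"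
      by (simp add: add_divide_distrib[symmetric])
    ultimately show ?thesis using pl m_le a2 by linarith
  qed
  show ?thesis
    using Esets Emeas main unfolding M_def c_def \<mu>_def by blast
qed

end
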